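(* Let $\mathcal{I}$ be an instance of SNSAT with $|\mathcal{I}|=n$, and let $\mathcal{K}_\mathcal{I}$ and $\psi_n$ be the Kripke structure and formula associated with $\mathcal{I}$ as described in the context. Then $v_\mathcal{I}(x_n)=\top$ if and only if $\mathcal{K}_\mathcal{I}\models[B]\bot\to\psi_n$, i.e., every initial track of $\mathcal{K}_\mathcal{I}$ satisfies $[B]\bot\to\psi_n$.
   Context: SNSAT: an instance $\mathcal{I}$ consists of Boolean variables $X=\{x_1,\dots,x_n\}$ and propositional formulas $F_1(Z_1),F_2(x_1,Z_2),\dots,F_n(x_1,\dots,x_{n-1},Z_n)$, where $F_i$ uses variables among $x_1,\dots,x_{i-1}$ and $Z_i=\{z_i^1,\dots,z_i^{j_i}\}$, the sets $Z_i$ being pairwise disjoint and disjoint from $X$; $|\mathcal{I}|=n$. The valuation $v_\mathcal{I}$ of $X$ is defined by $v_\mathcal{I}(x_i)=\top$ iff $F_i(v_\mathcal{I}(x_1),\dots,v_\mathcal{I}(x_{i-1}),Z_i)$ is satisfiable. Kripke structures, tracks and semantics: a finite Kripke structure $(\mathcal{AP},W,\delta,\mu,w_0)$ has left-total $\delta\subseteq W\times W$, labelling $\mu:W\to2^{\mathcal{AP}}$ and initial state $w_0$; a track is a nonempty finite sequence of states consecutive in $\delta$; it is initial if its first state is $w_0$; $\mathrm{fst},\mathrm{lst}$ are its first/last state. Formulas use proposition letters, $\neg,\wedge$ (other connectives as abbreviations), $\top,\bot$, $\langle A\rangle$, $\langle B\rangle$, $[B]\psi=\neg\langle B\rangle\neg\psi$.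 $\rho\models p$ iff $p\in\mu(w)$ for all states $w$ of $\rho$; $\rho\models\langle A\rangle\psi$ iff some track $\rho'$ with $\mathrm{fst}(\rho')=\mathrm{lst}(\rho)$ satisfies $\psi$; $\rho\models\langle B\rangle\psi$ iff some proper prefix $\rho(1,i)$, $1\le i<|\rho|$, satisfies $\psi$. $\mathcal{K}\models\psi$ iff all initial tracks satisfy $\psi$. The $F_i$ are read as formulas over proposition letters $X\cup Z$. Construction: let $Z=\bigcup_iZ_i$, $R=\{r_1,\dots,r_n\}$, $R_i=R\setminus\{r_i\}$. $\mathcal{K}_\mathcal{I}$ has proposition letters $X\cup Z\cup\{s,t\}\cup R\cup\{p_{\overline{x_i}}:1\le i\le n\}$ and distinct states $s_0$ and, for each $i$, $w_{x_i},\overline{w_{x_i}},\overline{s_i}$, and $w_{z_i^u},\overline{w_{z_i^u}}$ for $1\le u\le j_i$. Labels: $\mu(w_{x_i})=X\cup Z\cup\{s,t\}\cup R_i$; $\mu(\overline{w_{x_i}})=(X\setminus\{x_i\})\cup Z\cup\{s,t\}\cup R_i\cup\{p_{\overline{x_i}}\}$; $\mu(w_{z_i^u})=X\cup Z\cup\{s,t\}\cup R_i$; $\mu(\overline{w_{z_i^u}})=X\cup(Z\setminus\{z_i^u\})\cup\{s,t\}\cup R_i$; $\mu(\overline{s_i})=X\cup Z\cup\{t\}\cup R_i$; $\mu(s_0)=X\cup Z\cup\{s\}\cup R$. Call $L_i^0=\{w_{x_i},\overline{w_{x_i}}\}$ and $L_i^u=\{w_{z_i^u},\overline{w_{z_i^u}}\}$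 for $1\le u\le j_i$. Transitions: $\overline{w_{x_i}}\to\overline{s_i}\to w_{x_i}$; every state of $L_i^{u}$ has an edge to both states of $L_i^{u+1}$ for $0\le u<j_i$; every state of $L_i^{j_i}$ has an edge to both states of $L_{i-1}^0$ if $i\ge2$, and to $s_0$ if $i=1$; $s_0\to s_0$. The initial state is $w_{x_n}$. Formulas: $\ell_{=2}=\langle B\rangle\top\wedge[B][B]\bot$; $\psi_0=\bot$ and for $k\ge1$, $\psi_k=\langle A\rangle\varphi_k$ with $\varphi_k=(s\wedge\neg t)\wedge\bigwedge_{i=1}^n\big((x_i\wedge\neg r_i)\to F_i(x_1,\dots,x_{i-1},Z_i)\big)\wedge[B]\Big(\big(\bigvee_{i=1}^n\langle A\rangle p_{\overline{x_i}}\big)\to\langle A\rangle\big(\neg s\wedge\ell_{=2}\wedge\langle A\rangle(\ell_{=2}\wedge\neg\psi_{k-1})\big)\Big)$. *)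

theory Defs
  imports Main
begin

text \<open>LX i = x_i, LZ i u = z_i^u, LS = s, LT = t, LR i = r_i, LP i = p_{overline x_i}.\<close>
datatype letter = LX nat | LZ nat nat | LS | LT | LR nat | LP nat

datatype 'v pform = PVar 'v | PTrue | PFalse | PNot "'v pform"
  | PAnd "'v pform" "'v pform" | POr "'v pform" "'v pform"

primrec peval :: "('v \<Rightarrow> bool) \<Rightarrow> 'v pform \<Rightarrow> bool" where
  "peval a (PVar v) = a v"
| "peval a PTrue = True"
| "peval a PFalse = False"
| "peval a (PNot f) = (\<not> peval a f)"
| "peval a (PAnd f g) = (peval a f \<and> peval a g)"
| "peval a (POr f g) = (peval a f \<or> peval a g)"

primrec pvars :: "'v pform \<Rightarrow> 'v set" where
  "pvars (PVar v) = {v}"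
| "pvars PTrue = {}"
| "pvars PFalse = {}"
| "pvars (PNot f) = pvars f"
| "pvars (PAnd f g) = pvars f \<union> pvars g"
| "pvars (POr f g) = pvars f \<union> pvars g"

text \<open>An instance of size n: j i = |Z_i| and F i is the formula F_i (for 1 <= i <= n),
  using only x_1..x_{i-1} and z_i^1..z_i^{j i}.\<close>
definition snsat_instance :: "nat \<Rightarrow> (nat \<Rightarrow> nat) \<Rightarrow> (nat \<Rightarrow> letter pform) \<Rightarrow> bool" where
  "snsat_instance n j F \<longleftrightarrow>
     (\<forall>i\<in>{1..n}. pvars (F i) \<subseteq> LX ` {1..<i} \<union> {LZ i u | u. 1 \<le> u \<and> u \<le> j i})"

text \<open>F_i(b_1,...,b_{i-1},Z_i) is satisfiable: some assignment to the remaining letters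
  makes it true, the x_k being fixed to val k.\<close>
definition sat_with :: "(nat \<Rightarrow> bool) \<Rightarrow> letter pform \<Rightarrow> bool" where
  "sat_with val f \<longleftrightarrow>
     (\<exists>z. peval (\<lambda>l. case l of LX k \<Rightarrow> val k | _ \<Rightarrow> z l) f)"

text \<open>snval F i k = v_I(x_k) for k <= i (computed stage by stage).\<close>
primrec snval :: "(nat \<Rightarrow> letter pform) \<Rightarrow> nat \<Rightarrow> nat \<Rightarrow> bool" where
  "snval F 0 = (\<lambda>k. False)"
| "snval F (Suc i) = (snval F i)(Suc i := sat_with (snval F i) (F (Suc i)))"

definition vI :: "(nat \<Rightarrow> letter pform) \<Rightarrow> nat \<Rightarrow> bool" where
  "vI F i = snval F i i"

record ('ap, 'w) kripke =
  kAP :: "'ap set"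
  kW :: "'w set"
  kR :: "('w \<times> 'w) set"
  kmu :: "'w \<Rightarrow> 'ap set"
  kinit :: 'w

definition is_track :: "('ap, 'w) kripke \<Rightarrow> 'w list \<Rightarrow> bool" where
  "is_track K \<rho> \<longleftrightarrow> \<rho> \<noteq> [] \<and> set \<rho> \<subseteq> kW K \<and>
     (\<forall>i. Suc i < length \<rho> \<longrightarrow> (\<rho> ! i, \<rho> ! Suc i) \<in> kR K)"

datatype 'ap hs = HProp 'ap | HNot "'ap hs" | HAnd "'ap hs" "'ap hs" | HTop | HBot
  | HA "'ap hs" | HB "'ap hs"

definition HOr :: "'ap hs \<Rightarrow> 'ap hs \<Rightarrow> 'ap hs" where
  "HOr f g = HNot (HAnd (HNot f) (HNot g))"
definition HImp :: "'ap hs \<Rightarrow> 'ap hs \<Rightarrow> 'ap hs" where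
  "HImp f g = HNot (HAnd f (HNot g))"
definition HBoxB :: "'ap hs \<Rightarrow> 'ap hs" where
  "HBoxB f = HNot (HB (HNot f))"

primrec hsat :: "('ap, 'w) kripke \<Rightarrow> 'ap hs \<Rightarrow> 'w list \<Rightarrow> bool" where
  "hsat K (HProp p) \<rho> = (\<forall>w\<in>set \<rho>. p \<in> kmu K w)"
| "hsat K (HNot f) \<rho> = (\<not> hsat K f \<rho>)"
| "hsat K (HAnd f g) \<rho> = (hsat K f \<rho> \<and> hsat K g \<rho>)"
| "hsat K HTop \<rho> = True"
| "hsat K HBot \<rho> = False"
| "hsat K (HA f) \<rho> = (\<exists>\<rho>'. is_track K \<rho>' \<and> hd \<rho>' = last \<rho> \<and> hsat K f \<rho>')"
| "hsat K (HB f) \<rho> = (\<exists>i. 1 \<le> i \<and> i < length \<rho> \<and> hsat K f (take i \<rho>))"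

definition kmodels :: "('ap, 'w) kripke \<Rightarrow> 'ap hs \<Rightarrow> bool" where
  "kmodels K f \<longleftrightarrow> (\<forall>\<rho>. is_track K \<rho> \<and> hd \<rho> = kinit K \<longrightarrow> hsat K f \<rho>)"

primrec pf_to_hs :: "'ap pform \<Rightarrow> 'ap hs" where
  "pf_to_hs (PVar v) = HProp v"
| "pf_to_hs PTrue = HTop"
| "pf_to_hs PFalse = HBot"
| "pf_to_hs (PNot f) = HNot (pf_to_hs f)"
| "pf_to_hs (PAnd f g) = HAnd (pf_to_hs f) (pf_to_hs g)"
| "pf_to_hs (POr f g) = HOr (pf_to_hs f) (pf_to_hs g)"

datatype state = S0 | WX nat | WXb nat | Sb nat | WZ nat nat | WZb nat nat

definition Xset :: "nat \<Rightarrow> letter set" where "Xset n = LX ` {1..n}"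
definition Zset :: "nat \<Rightarrow> (nat \<Rightarrow> nat) \<Rightarrow> letter set" where
  "Zset n j = {LZ i u | i u. 1 \<le> i \<and> i \<le> n \<and> 1 \<le> u \<and> u \<le> j i}"
definition Rset :: "nat \<Rightarrow> letter set" where "Rset n = LR ` {1..n}"
definition Rminus :: "nat \<Rightarrow> nat \<Rightarrow> letter set" where "Rminus n i = Rset n - {LR i}"

definition layer :: "nat \<Rightarrow> nat \<Rightarrow> state set" where
  "layer i u = (if u = 0 then {WX i, WXb i} else {WZ i u, WZb i u})"

definition KI_states :: "nat \<Rightarrow> (nat \<Rightarrow> nat) \<Rightarrow> state set" where
  "KI_states n j = {S0} \<union> (\<Union>i\<in>{1..n}. {WX i, WXb i, Sb i}
      \<union> (\<Union>u\<in>{1..j i}. {WZ i u, WZb i u}))"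

fun KI_label :: "nat \<Rightarrow> (nat \<Rightarrow> nat) \<Rightarrow> state \<Rightarrow> letter set" where
  "KI_label n j (WX i) = Xset n \<union> Zset n j \<union> {LS, LT} \<union> Rminus n i"
| "KI_label n j (WXb i) = (Xset n - {LX i}) \<union> Zset n j \<union> {LS, LT} \<union> Rminus n i \<union> {LP i}"
| "KI_label n j (WZ i u) = Xset n \<union> Zset n j \<union> {LS, LT} \<union> Rminus n i"
| "KI_label n j (WZb i u) = Xset n \<union> (Zset n j - {LZ i u}) \<union> {LS, LT} \<union> Rminus n i"
| "KI_label n j (Sb i) = Xset n \<union> Zset n j \<union> {LT} \<union> Rminus n i"
| "KI_label n j S0 = Xset n \<union> Zset n j \<union> {LS} \<union> Rset n"

definition KI_trans :: "nat \<Rightarrow> (nat \<Rightarrow> nat) \<Rightarrow> (state \<times> state) set" where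
  "KI_trans n j =
     {(WXb i, Sb i) | i. 1 \<le> i \<and> i \<le> n}
   \<union> {(Sb i, WX i) | i. 1 \<le> i \<and> i \<le> n}
   \<union> {(a, b) | a b i u. 1 \<le> i \<and> i \<le> n \<and> u < j i \<and> a \<in> layer i u \<and> b \<in> layer i (Suc u)}
   \<union> {(a, b) | a b i. 2 \<le> i \<and> i \<le> n \<and> a \<in> layer i (j i) \<and> b \<in> layer (i - 1) 0}
   \<union> {(a, S0) | a. 1 \<le> n \<and> a \<in> layer 1 (j 1)}
   \<union> {(S0, S0)}"

definition KI :: "nat \<Rightarrow> (nat \<Rightarrow> nat) \<Rightarrow> (letter, state) kripke" where
  "KI n j = \<lparr> kAP = Xset n \<union> Zset n j \<union> {LS, LT} \<union> Rset n \<union> LP ` {1..n},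
              kW = KI_states n j, kR = KI_trans n j, kmu = KI_label n j, kinit = WX n \<rparr>"

definition ell2 :: "letter hs" where
  "ell2 = HAnd (HB HTop) (HBoxB (HBoxB HBot))"

definition bigAnd :: "letter hs list \<Rightarrow> letter hs" where
  "bigAnd fs = foldr HAnd fs HTop"
definition bigOr :: "letter hs list \<Rightarrow> letter hs" where
  "bigOr fs = foldr HOr fs HBot"

text \<open>phi_body n F p = phi_k with p standing for psi_{k-1}; psi_0 = bot, psi_{k+1} = <A> phi_{k+1}.\<close>
definition phi_body :: "nat \<Rightarrow> (nat \<Rightarrow> letter pform) \<Rightarrow> letter hs \<Rightarrow> letter hs" where
  "phi_body n F p =
     HAnd (HAnd (HProp LS) (HNot (HProp LT)))
     (HAnd (bigAnd (map (\<lambda>i. HImp (HAnd (HProp (LX i)) (HNot (HProp (LR i)))) (pf_to_hs (F i))) [1..<Suc n]))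
       (HBoxB (HImp (bigOr (map (\<lambda>i. HA (HProp (LP i))) [1..<Suc n]))
                    (HA (HAnd (HNot (HProp LS)) (HAnd ell2 (HA (HAnd ell2 (HNot p)))))))))"

primrec psi :: "nat \<Rightarrow> (nat \<Rightarrow> letter pform) \<Rightarrow> nat \<Rightarrow> letter hs" where
  "psi n F 0 = HBot"
| "psi n F (Suc k) = HA (phi_body n F (psi n F k))"

end

theory Submission
  imports Defs
begin


lemma is_track_succ: "is_track K \<rho> \<longleftrightarrow> \<rho> \<noteq> [] \<and> set \<rho> \<subseteq> kW K \<and> successively (\<lambda>a b. (a,b) \<in> kR K) \<rho>"
  by (simp add: is_track_def successively_conv_nth)

lemma is_track_append: "is_track K xs \<Longrightarrow> is_track K ys \<Longrightarrow> (last xs, hd ys) \<in> kR K \<Longrightarrow> is_track K (xs @ ys)"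
  by (auto simp: is_track_succ successively_append_iff)

lemma is_track_single: "is_track K [a] \<longleftrightarrow> a \<in> kW K"
  by (simp add: is_track_succ)

lemma is_track_two: "is_track K [a,b] \<longleftrightarrow> a \<in> kW K \<and> b \<in> kW K \<and> (a,b) \<in> kR K"
  by (simp add: is_track_succ)

lemma hsat_HBoxB: "hsat K (HBoxB f) \<rho> \<longleftrightarrow> (\<forall>i. 1 \<le> i \<and> i < length \<rho> \<longrightarrow> hsat K f (take i \<rho>))"
  by (auto simp: HBoxB_def)

lemma hsat_HImp: "hsat K (HImp f g) \<rho> \<longleftrightarrow> (hsat K f \<rho> \<longrightarrow> hsat K g \<rho>)"
  by (auto simp: HImp_def)

lemma hsat_HOr: "hsat K (HOr f g) \<rho> \<longleftrightarrow> (hsat K f \<rho> \<or> hsat K g \<rho>)"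
  by (auto simp: HOr_def)

lemma hsat_ell2: "hsat K ell2 \<rho> \<longleftrightarrow> length \<rho> = 2"
proof -
  have "hsat K ell2 \<rho> \<longleftrightarrow> (\<exists>i. 1 \<le> i \<and> i < length \<rho>) \<and> (\<forall>i. 1 \<le> i \<and> i < length \<rho> \<longrightarrow> \<not> (\<exists>i'. 1 \<le> i' \<and> i' < min i (length \<rho>)))"
    by (auto simp: ell2_def hsat_HBoxB)
  also have "\<dots> \<longleftrightarrow> length \<rho> = 2"
    apply (rule iffI)
     apply (metis One_nat_def Suc_1 Suc_lessI le_less_Suc_eq less_Suc_eq_le min.absorb1 nat_less_le not_less_eq_eq)
    by auto
  finally show ?thesis .
qed

lemma len2: "length xs = 2 \<Longrightarrow> \<exists>a b. xs = [a,b]"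
  by (metis One_nat_def Suc_1 length_0_conv length_Suc_conv)

lemma hsat_bigAnd: "hsat K (bigAnd fs) \<rho> \<longleftrightarrow> (\<forall>f\<in>set fs. hsat K f \<rho>)"
  by (induction fs) (auto simp: bigAnd_def)

lemma hsat_bigOr: "hsat K (bigOr fs) \<rho> \<longleftrightarrow> (\<exists>f\<in>set fs. hsat K f \<rho>)"
  by (induction fs) (auto simp: bigOr_def hsat_HOr)

lemma hsat_pf: "hsat K (pf_to_hs f) \<rho> = peval (\<lambda>l. hsat K (HProp l) \<rho>) f"
  by (induction f) (auto simp: hsat_HOr)

lemma peval_cong: "(\<forall>v\<in>pvars f. a v = b v) \<Longrightarrow> peval a f = peval b f"
  by (induction f) auto

lemma snval_eq: "snval F i k = (k \<le> i \<and> vI F k)"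
  by (induction i arbitrary: k) (auto simp: vI_def)

lemma vI_Suc: "vI F (Suc l) = sat_with (snval F l) (F (Suc l))"
  by (simp add: vI_def)

fun blk :: "state \<Rightarrow> nat" where
  "blk S0 = 0" | "blk (WX i) = i" | "blk (WXb i) = i" | "blk (Sb i) = i"
| "blk (WZ i u) = i" | "blk (WZb i u) = i"

lemma lab_LR: "LR l \<in> KI_label n j w \<longleftrightarrow> (1 \<le> l \<and> l \<le> n \<and> (w = S0 \<or> blk w \<noteq> l))"
  by (cases w) (auto simp: Xset_def Zset_def Rset_def Rminus_def)
lemma lab_LX: "LX k \<in> KI_label n j w \<longleftrightarrow> (1 \<le> k \<and> k \<le> n \<and> w \<noteq> WXb k)"
  by (cases w) (auto simp: Xset_def Zset_def Rset_def Rminus_def)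
lemma lab_LZ: "LZ l u \<in> KI_label n j w \<longleftrightarrow> (LZ l u \<in> Zset n j \<and> w \<noteq> WZb l u)"
  by (cases w) (auto simp: Xset_def Zset_def Rset_def Rminus_def)
lemma lab_LS: "LS \<in> KI_label n j w \<longleftrightarrow> (\<forall>m. w \<noteq> Sb m)"
  by (cases w) (auto simp: Xset_def Zset_def Rset_def Rminus_def)
lemma lab_LT: "LT \<in> KI_label n j w \<longleftrightarrow> w \<noteq> S0"
  by (cases w) (auto simp: Xset_def Zset_def Rset_def Rminus_def)
lemma lab_LP: "LP m \<in> KI_label n j w \<longleftrightarrow> w = WXb m"
  by (cases w) (auto simp: Xset_def Zset_def Rset_def Rminus_def)

lemma E1: "(a, Sb m) \<in> KI_trans n j \<Longrightarrow> a = WXb m"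
  by (auto simp: KI_trans_def layer_def split: if_splits)
lemma E2: "(Sb m, b) \<in> KI_trans n j \<Longrightarrow> b = WX m"
  by (auto simp: KI_trans_def layer_def split: if_splits)
lemma E3: "(a, b) \<in> KI_trans n j \<Longrightarrow> blk b \<le> blk a \<and> blk a \<le> Suc (blk b)"
  by (auto simp: KI_trans_def layer_def split: if_splits)
lemma E4: "(a, WXb m) \<in> KI_trans n j \<Longrightarrow> blk a = Suc m"
  by (auto simp: KI_trans_def layer_def split: if_splits)
lemma E5: "(S0, b) \<in> KI_trans n j \<Longrightarrow> b = S0"
  by (auto simp: KI_trans_def layer_def split: if_splits)

lemma T_layer: "1 \<le> i \<Longrightarrow> i \<le> n \<Longrightarrow> u < j i \<Longrightarrow> a \<in> layer i u \<Longrightarrow> b \<in> layer i (Suc u) \<Longrightarrow> (a,b) \<in> KI_trans n j"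
  unfolding KI_trans_def by blast
lemma T_down: "2 \<le> i \<Longrightarrow> i \<le> n \<Longrightarrow> a \<in> layer i (j i) \<Longrightarrow> b \<in> layer (i - 1) 0 \<Longrightarrow> (a,b) \<in> KI_trans n j"
  unfolding KI_trans_def by blast
lemma T_S0: "1 \<le> n \<Longrightarrow> a \<in> layer 1 (j 1) \<Longrightarrow> (a,S0) \<in> KI_trans n j"
  unfolding KI_trans_def by blast
lemma T_Sb: "1 \<le> i \<Longrightarrow> i \<le> n \<Longrightarrow> (WXb i, Sb i) \<in> KI_trans n j"
  unfolding KI_trans_def by blast
lemma T_Sb2: "1 \<le> i \<Longrightarrow> i \<le> n \<Longrightarrow> (Sb i, WX i) \<in> KI_trans n j"
  unfolding KI_trans_def by blast

lemma st_WXb: "WXb l \<in> KI_states n j \<longleftrightarrow> 1 \<le> l \<and> l \<le> n"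
  by (auto simp: KI_states_def)
lemma st_WX: "WX l \<in> KI_states n j \<longleftrightarrow> 1 \<le> l \<and> l \<le> n"
  by (auto simp: KI_states_def)
lemma st_Sb: "Sb l \<in> KI_states n j \<longleftrightarrow> 1 \<le> l \<and> l \<le> n"
  by (auto simp: KI_states_def)
lemma layer_states: "1\<le>l \<Longrightarrow> l\<le>n \<Longrightarrow> u \<le> j l \<Longrightarrow> layer l u \<subseteq> KI_states n j"
  by (auto simp: layer_def KI_states_def)

lemma KI_simps[simp]: "kW (KI n j) = KI_states n j" "kR (KI n j) = KI_trans n j"
  "kmu (KI n j) = KI_label n j" "kinit (KI n j) = WX n"
  by (simp_all add: KI_def)

lemma ivt: "l \<le> f 0 \<Longrightarrow> f q < l \<Longrightarrow> (\<forall>p<q. f p \<le> Suc (f (Suc p))) \<Longrightarrow> \<exists>p<q. f p = l"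
proof (induction q)
  case 0 then show ?case by simp
next
  case (Suc q)
  show ?case
  proof (cases "f q < l")
    case True with Suc show ?thesis by (metis less_Suc_eq)
  next
    case False with Suc.prems(2,3) have "f q = l" by (metis Suc_leI le_antisym lessI not_le order_trans) 
    then show ?thesis by blast
  qed
qed



locale kc = fixes n :: nat and j :: "nat \<Rightarrow> nat" and F :: "nat \<Rightarrow> letter pform"
  assumes n1: "1 \<le> n" and inst: "snsat_instance n j F"
begin

lemma F_link:
  assumes "1 \<le> l" "l \<le> n"
    and "\<And>k. 1 \<le> k \<Longrightarrow> k < l \<Longrightarrow> ev (LX k) = vI F k"
    and "\<And>u. 1 \<le> u \<Longrightarrow> u \<le> j l \<Longrightarrow> ev (LZ l u) = z (LZ l u)"
  shows "peval ev (F l) = peval (\<lambda>lt. case lt of LX k \<Rightarrow> snval F (l - 1) k | _ \<Rightarrow> z lt) (F l)"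
proof (rule peval_cong, rule ballI)
  fix v assume v: "v \<in> pvars (F l)"
  have "pvars (F l) \<subseteq> LX ` {1..<l} \<union> {LZ l u | u. 1 \<le> u \<and> u \<le> j l}"
    using inst assms(1,2) by (auto simp: snsat_instance_def)
  with v have "v \<in> LX ` {1..<l} \<or> v \<in> {LZ l u | u. 1 \<le> u \<and> u \<le> j l}" by blast
  then show "ev v = (case v of LX k \<Rightarrow> snval F (l - 1) k | _ \<Rightarrow> z v)"
  proof
    assume "v \<in> LX ` {1..<l}"
    then obtain k where "v = LX k" "1 \<le> k" "k < l" by auto
    then show ?thesis using assms(3) by (auto simp: snval_eq)
  next
    assume "v \<in> {LZ l u | u. 1 \<le> u \<and> u \<le> j l}"
    then obtain u where "v = LZ l u" "1 \<le> u" "u \<le> j l" by auto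
    then show ?thesis using assms(4) by simp
  qed
qed

lemma vI_alt: "1 \<le> l \<Longrightarrow> vI F l = (\<exists>z. peval (\<lambda>lt. case lt of LX k \<Rightarrow> snval F (l - 1) k | _ \<Rightarrow> z lt) (F l))"
proof -
  assume "1 \<le> l"
  then obtain m where "l = Suc m" by (cases l) auto
  then have "vI F l = sat_with (snval F (l - 1)) (F l)" by (simp add: vI_Suc)
  then show ?thesis unfolding sat_with_def .
qed

definition zw :: "nat \<Rightarrow> letter \<Rightarrow> bool" where
  "zw l = (SOME z. peval (\<lambda>lt. case lt of LX k \<Rightarrow> snval F (l - 1) k | _ \<Rightarrow> z lt) (F l))"

lemma zw_sat: "1 \<le> l \<Longrightarrow> vI F l \<Longrightarrow> peval (\<lambda>lt. case lt of LX k \<Rightarrow> snval F (l - 1) k | _ \<Rightarrow> zw l lt) (F l)"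
proof -
  assume "1 \<le> l" "vI F l"
  then have "\<exists>z. peval (\<lambda>lt. case lt of LX k \<Rightarrow> snval F (l - 1) k | _ \<Rightarrow> z lt) (F l)"
    using vI_alt by blast
  then show ?thesis unfolding zw_def by (rule someI_ex)
qed

definition sel :: "nat \<Rightarrow> nat \<Rightarrow> state" where
  "sel l u = (if u = 0 then (if vI F l then WX l else WXb l)
              else (if zw l (LZ l u) then WZ l u else WZb l u))"

definition blkl :: "nat \<Rightarrow> state list" where "blkl l = map (sel l) [0..<Suc (j l)]"

primrec path :: "nat \<Rightarrow> state list" where
  "path 0 = [S0]" | "path (Suc l) = blkl (Suc l) @ path l"

lemma sel_layer: "sel l u \<in> layer l u" by (simp add: sel_def layer_def)

lemma blkl_track: "1 \<le> l \<Longrightarrow> l \<le> n \<Longrightarrow> is_track (KI n j) (blkl l)"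
  unfolding is_track_def
proof (intro conjI allI impI)
  assume l: "1 \<le> l" "l \<le> n"
  show "blkl l \<noteq> []" by (simp add: blkl_def del: upt_Suc)
  show "set (blkl l) \<subseteq> kW (KI n j)"
  proof
    fix w assume "w \<in> set (blkl l)"
    then obtain u where "u \<le> j l" "w = sel l u" by (auto simp: blkl_def less_Suc_eq_le simp del: upt_Suc)
    then show "w \<in> kW (KI n j)" using layer_states[of l n u j, OF l(1) l(2) \<open>u \<le> j l\<close>] sel_layer[of l u] by auto
  qed
  fix p assume "Suc p < length (blkl l)"
  then have p: "p < j l" by (simp add: blkl_def del: upt_Suc)
  have "blkl l ! p = sel l p" "blkl l ! Suc p = sel l (Suc p)" using p
    by (simp_all add: blkl_def nth_map_upt del: upt_Suc)
  then show "(blkl l ! p, blkl l ! Suc p) \<in> kR (KI n j)"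
    using T_layer[of l n p j "sel l p" "sel l (Suc p)", OF l p sel_layer sel_layer] by simp
qed

lemma path_props: "l \<le> n \<Longrightarrow> is_track (KI n j) (path l) \<and> (if l = 0 then hd (path l) = S0 else hd (path l) \<in> layer l 0)"
proof (induction l)
  case 0 then show ?case by (simp add: is_track_single KI_states_def)
next
  case (Suc l)
  have lst: "last (blkl (Suc l)) = sel (Suc l) (j (Suc l))" by (simp add: blkl_def last_map del: upt_Suc)
  have hd: "hd (blkl (Suc l)) = sel (Suc l) 0" by (simp add: blkl_def hd_map del: upt_Suc)
  have "(last (blkl (Suc l)), hd (path l)) \<in> KI_trans n j"
  proof (cases "l = 0")
    case True then show ?thesis using Suc.prems lst T_S0[of n "sel 1 (j 1)" j, OF _ sel_layer[of 1 "j 1"]] by simp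
  next
    case False then show ?thesis using Suc lst T_down[of "Suc l" n] sel_layer by auto
  qed
  then have "is_track (KI n j) (path (Suc l))"
    using Suc blkl_track[of "Suc l"] by (auto intro!: is_track_append)
  moreover have "hd (path (Suc l)) \<in> layer (Suc l) 0"
    using hd sel_layer by (simp add: blkl_def del: upt_Suc)
  ultimately show ?case by simp
qed

lemma set_path: "w \<in> set (path l) \<longleftrightarrow> w = S0 \<or> (\<exists>m u. 1 \<le> m \<and> m \<le> l \<and> u \<le> j m \<and> w = sel m u)"
proof (induction l)
  case 0 then show ?case by simp
next
  case (Suc l)
  have "w \<in> set (blkl (Suc l)) \<longleftrightarrow> (\<exists>u. u \<le> j (Suc l) \<and> w = sel (Suc l) u)"
    by (auto simp: blkl_def less_Suc_eq_le simp del: upt_Suc)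
  then show ?case using Suc by (auto simp: le_Suc_eq)
qed

lemma sel_eq: "sel m u = WXb k \<longleftrightarrow> u = 0 \<and> m = k \<and> \<not> vI F k"
  "sel m u = WZb a b \<longleftrightarrow> u \<noteq> 0 \<and> m = a \<and> u = b \<and> \<not> zw m (LZ m u)"
  "sel m u \<noteq> Sb c" "sel m u \<noteq> S0" "blk (sel m u) = m"
  by (auto simp: sel_def)

end


context kc begin

context
  fixes \<rho> :: "state list" and i :: nat
  assumes tr: "is_track (KI n j) \<rho>" and h: "hd \<rho> = WX i" and S0in: "S0 \<in> set \<rho>"
begin

lemma edge: "Suc p < length \<rho> \<Longrightarrow> (\<rho> ! p, \<rho> ! Suc p) \<in> KI_trans n j"
  using tr by (simp add: is_track_def)

lemma nth0: "\<rho> ! 0 = WX i"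
  using tr h by (simp add: is_track_def hd_conv_nth)

lemma blk_le: "p < length \<rho> \<Longrightarrow> blk (\<rho> ! p) \<le> i"
proof (induction p)
  case 0 then show ?case by (simp add: nth0)
next
  case (Suc p)
  then show ?case using E3[OF edge[of p]] by auto
qed

lemma S0_tail: obtains q where "q < length \<rho>" "\<And>p. q \<le> p \<Longrightarrow> p < length \<rho> \<Longrightarrow> \<rho> ! p = S0"
proof -
  obtain q where q: "q < length \<rho>" "\<rho> ! q = S0" using S0in by (auto simp: in_set_conv_nth)
  have "\<rho> ! (q + d) = S0" if "q + d < length \<rho>" for d
    using that
  proof (induction d)
    case 0 then show ?case using q by simp
  next
    case (Suc d)
    then have "\<rho> ! (q + d) = S0" by simp
    then show ?case using E5 edge[of "q + d"] Suc.prems by auto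
  qed
  then have "\<And>p. q \<le> p \<Longrightarrow> p < length \<rho> \<Longrightarrow> \<rho> ! p = S0"
    by (metis le_add_diff_inverse)
  then show ?thesis using that q by blast
qed

lemma visit: "1 \<le> l \<Longrightarrow> l \<le> i \<Longrightarrow> \<exists>w\<in>set \<rho>. blk w = l"
proof -
  assume l: "1 \<le> l" "l \<le> i"
  obtain q where q: "q < length \<rho>" "\<rho> ! q = S0" using S0in by (auto simp: in_set_conv_nth)
  have "\<exists>p<q. blk (\<rho> ! p) = l"
    apply (rule ivt[where f = "\<lambda>p. blk (\<rho> ! p)"])
    using l q nth0 E3[OF edge] by auto
  then show ?thesis using q by (metis nth_mem order.strict_trans)
qed

lemma noWXb: "WXb i \<notin> set \<rho>"
proof
  assume "WXb i \<in> set \<rho>"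
  then obtain p where p: "p < length \<rho>" "\<rho> ! p = WXb i" by (auto simp: in_set_conv_nth)
  then have "p \<noteq> 0" using nth0 by (cases p) auto
  then obtain p' where pp: "p = Suc p'" by (cases p) auto
  then have "blk (\<rho> ! p') = Suc i" using E4 edge[of p'] p by auto
  moreover have "blk (\<rho> ! p') \<le> i" using blk_le[of p'] pp p by auto
  ultimately show False by simp
qed

lemma notlast: "p < length \<rho> \<Longrightarrow> \<rho> ! p = WXb l \<Longrightarrow> Suc p < length \<rho>"
proof -
  assume p: "p < length \<rho>" "\<rho> ! p = WXb l"
  obtain q where q: "q < length \<rho>" "\<And>p. q \<le> p \<Longrightarrow> p < length \<rho> \<Longrightarrow> \<rho> ! p = S0"
    using S0_tail by blast
  have "p < q" using q(2)[of p] p by (metis not_le state.distinct)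
  then show ?thesis using q(1) by simp
qed

end

end


context kc begin

lemma last_take_nth: "p < length xs \<Longrightarrow> last (take (Suc p) xs) = xs ! p"
  by (simp add: take_Suc_conv_app_nth)

lemma fwd:
  assumes i: "1 \<le> i" "i \<le> n"
    and IH: "\<And>l \<rho>. 1 \<le> l \<Longrightarrow> l < i \<Longrightarrow> last \<rho> = WX l \<Longrightarrow> hsat (KI n j) p \<rho> \<longleftrightarrow> vI F l"
    and tr: "is_track (KI n j) \<rho>" and h: "hd \<rho> = WX i"
    and ph: "hsat (KI n j) (phi_body n F p) \<rho>"
  shows "vI F i"
proof -
  define ev where "ev = (\<lambda>lt. \<forall>w\<in>set \<rho>. lt \<in> KI_label n j w)"
  have pf: "hsat (KI n j) (pf_to_hs f) \<rho> = peval ev f" for f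
    by (simp add: hsat_pf ev_def)
  from ph have hT: "\<not> (\<forall>w\<in>set \<rho>. LT \<in> KI_label n j w)"
    by (simp add: phi_body_def)
  then have S0in: "S0 \<in> set \<rho>" by (auto simp: lab_LT)
  from ph have hA: "\<And>l. 1 \<le> l \<Longrightarrow> l \<le> n \<Longrightarrow> ev (LX l) \<Longrightarrow> \<not> ev (LR l) \<Longrightarrow> peval ev (F l)"
    by (auto simp: phi_body_def hsat_bigAnd hsat_HImp pf ev_def simp del: upt_Suc)
  from ph have hB: "\<And>m. 1 \<le> m \<Longrightarrow> m < length \<rho> \<Longrightarrow>
      (\<exists>l\<in>set [1..<Suc n]. hsat (KI n j) (HA (HProp (LP l))) (take m \<rho>)) \<Longrightarrow>
      hsat (KI n j) (HA (HAnd (HNot (HProp LS)) (HAnd ell2 (HA (HAnd ell2 (HNot p)))))) (take m \<rho>)"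
    unfolding phi_body_def hsat.simps(3) hsat_HBoxB hsat_HImp hsat_bigOr by (auto simp del: upt_Suc)
  have noR: "\<not> ev (LR l)" if l: "1 \<le> l" "l \<le> i" for l
  proof -
    obtain w where w: "w \<in> set \<rho>" "blk w = l" using visit[OF tr h S0in l] by blast
    then have "w \<noteq> S0" using l by auto
    then show ?thesis using l i w by (auto simp: ev_def lab_LR)
  qed
  have evX: "ev (LX k) \<longleftrightarrow> WXb k \<notin> set \<rho>" if "1 \<le> k" "k \<le> n" for k
    using that by (auto simp: ev_def lab_LX)
  have setW: "set \<rho> \<subseteq> KI_states n j" using tr by (simp add: is_track_def)
  have Xneg: "\<not> vI F l" if l: "1 \<le> l" "l < i" and nev: "\<not> ev (LX l)" for l
  proof -
    have "WXb l \<in> set \<rho>" using evX[of l] l i nev by auto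
    then obtain q where q: "q < length \<rho>" "\<rho> ! q = WXb l" by (auto simp: in_set_conv_nth)
    have sq: "Suc q < length \<rho>" using notlast[OF tr h S0in q] .
    have lst: "last (take (Suc q) \<rho>) = WXb l" by (subst last_take_nth[OF q(1)]) (rule q(2))
    have "hsat (KI n j) (HA (HProp (LP l))) (take (Suc q) \<rho>)"
      using lst l i by (auto simp: is_track_single st_WXb lab_LP intro!: exI[of _ "[WXb l]"])
    then have "hsat (KI n j) (HA (HAnd (HNot (HProp LS)) (HAnd ell2 (HA (HAnd ell2 (HNot p)))))) (take (Suc q) \<rho>)"
    proof -
      assume hl: "hsat (KI n j) (HA (HProp (LP l))) (take (Suc q) \<rho>)"
      have ex: "\<exists>l'\<in>set [1..<Suc n]. hsat (KI n j) (HA (HProp (LP l'))) (take (Suc q) \<rho>)"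
        using hl l i by (intro bexI[of _ l]) (auto simp del: upt_Suc)
      have "1 \<le> Suc q" by simp
      then show ?thesis using hB[of "Suc q"] sq ex by blast
    qed
    then obtain \<rho>2 where r2: "is_track (KI n j) \<rho>2" "hd \<rho>2 = WXb l" "\<exists>w\<in>set \<rho>2. LS \<notin> KI_label n j w"
        "length \<rho>2 = 2" "hsat (KI n j) (HA (HAnd ell2 (HNot p))) \<rho>2"
      using lst by (auto simp: hsat_ell2)
    obtain a b where ab: "\<rho>2 = [a,b]" using len2[OF r2(4)] by blast
    then have a: "a = WXb l" using r2 by simp
    have "(a,b) \<in> KI_trans n j" using r2(1) ab by (simp add: is_track_two)
    moreover obtain m where "b = Sb m" using r2(3) ab a by (auto simp: lab_LS)
    ultimately have b: "b = Sb l" using E1 a by auto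
    obtain \<rho>3 where r3: "is_track (KI n j) \<rho>3" "hd \<rho>3 = Sb l" "length \<rho>3 = 2" "\<not> hsat (KI n j) p \<rho>3"
      using r2(5) ab b by (auto simp: hsat_ell2)
    obtain c d where cd: "\<rho>3 = [c,d]" using len2[OF r3(3)] by blast
    then have "(Sb l, d) \<in> KI_trans n j" using r3 by (simp add: is_track_two)
    then have "d = WX l" by (rule E2)
    then have "last \<rho>3 = WX l" using cd by simp
    then show ?thesis using IH[OF l(1) l(2)] r3(4) by simp
  qed
  have claim: "1 \<le> l \<longrightarrow> l < i \<longrightarrow> ev (LX l) = vI F l" for l
  proof (induction l rule: less_induct)
    case (less l)
    show ?case
    proof (intro impI)
      assume l: "1 \<le> l" "l < i"
      show "ev (LX l) = vI F l"
      proof (cases "ev (LX l)")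
        case True
        then have "peval ev (F l)" using hA[of l] noR[of l] l i by auto
        moreover have "peval ev (F l) = peval (\<lambda>lt. case lt of LX k \<Rightarrow> snval F (l - 1) k | _ \<Rightarrow> ev lt) (F l)"
          apply (rule F_link) using l i less by auto
        ultimately have "vI F l" using vI_alt[OF l(1)] by blast
        then show ?thesis using True by simp
      next
        case False
        then show ?thesis using Xneg[OF l] by simp
      qed
    qed
  qed
  have "ev (LX i)" using evX[OF i] noWXb[OF tr h S0in] by simp
  then have "peval ev (F i)" using hA[OF i] noR[OF i(1) order.refl] by simp
  moreover have "peval ev (F i) = peval (\<lambda>lt. case lt of LX k \<Rightarrow> snval F (i - 1) k | _ \<Rightarrow> ev lt) (F i)"
    apply (rule F_link) using i claim by auto
  ultimately show "vI F i" using vI_alt[OF i(1)] by blast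
qed

end


context kc begin

lemma bwd:
  assumes i: "1 \<le> i" "i \<le> n"
    and IH: "\<And>l \<rho>. 1 \<le> l \<Longrightarrow> l < i \<Longrightarrow> last \<rho> = WX l \<Longrightarrow> hsat (KI n j) p \<rho> \<longleftrightarrow> vI F l"
    and v: "vI F i"
  shows "is_track (KI n j) (path i) \<and> hd (path i) = WX i \<and> hsat (KI n j) (phi_body n F p) (path i)"
proof -
  define \<rho> where "\<rho> = path i"
  define ev where "ev = (\<lambda>lt. \<forall>w\<in>set \<rho>. lt \<in> KI_label n j w)"
  have pf: "hsat (KI n j) (pf_to_hs f) \<rho> = peval ev f" for f
    by (simp add: hsat_pf ev_def)
  have tr: "is_track (KI n j) \<rho>" using path_props[of i] i by (simp add: \<rho>_def)
  obtain i' where i': "i = Suc i'" using i by (cases i) auto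
  have hd: "hd \<rho> = WX i"
    using v by (simp add: \<rho>_def i' blkl_def hd_map sel_def del: upt_Suc)
  have setp: "w \<in> set \<rho> \<longleftrightarrow> w = S0 \<or> (\<exists>m u. 1 \<le> m \<and> m \<le> i \<and> u \<le> j m \<and> w = sel m u)" for w
    by (simp add: \<rho>_def set_path)
  have selx: "WXb k = sel m u \<longleftrightarrow> u = 0 \<and> m = k \<and> \<not> vI F k" for k m u
    using sel_eq(1)[of m u k] by auto
  have selz: "WZb a b = sel m u \<longleftrightarrow> u \<noteq> 0 \<and> m = a \<and> u = b \<and> \<not> zw m (LZ m u)" for a b m u
    using sel_eq(2)[of m u a b] by auto
  have WXb_in: "WXb k \<in> set \<rho> \<longleftrightarrow> 1 \<le> k \<and> k \<le> i \<and> \<not> vI F k" for k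
    unfolding setp selx by auto
  have evX: "ev (LX k) = vI F k" if "1 \<le> k" "k \<le> i" for k
    using that i WXb_in[of k] by (auto simp: ev_def lab_LX)
  have evZ: "ev (LZ l u) = zw l (LZ l u)" if "1 \<le> l" "l \<le> i" "1 \<le> u" "u \<le> j l" for l u
  proof -
    have Z: "LZ l u \<in> Zset n j" using that i by (auto simp: Zset_def)
    have "WZb l u \<in> set \<rho> \<longleftrightarrow> \<not> zw l (LZ l u)"
      unfolding setp selz using that by auto
    then show ?thesis using Z by (auto simp: ev_def lab_LZ)
  qed
  have evR: "ev (LR l) \<longleftrightarrow> i < l" if "1 \<le> l" "l \<le> n" for l
  proof
    assume "ev (LR l)"
    then have "\<forall>w\<in>set \<rho>. w = S0 \<or> blk w \<noteq> l" by (auto simp: ev_def lab_LR)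
    moreover have "l \<le> i \<Longrightarrow> sel l 0 \<in> set \<rho>" unfolding setp using that by auto
    ultimately show "i < l" using sel_eq(4,5) by fastforce
  next
    assume il: "i < l"
    have "w = S0 \<or> blk w \<noteq> l" if w: "w \<in> set \<rho>" for w
    proof -
      from w have "w = S0 \<or> (\<exists>m u. 1 \<le> m \<and> m \<le> i \<and> u \<le> j m \<and> w = sel m u)" using setp by blast
      then show ?thesis
      proof
        assume "\<exists>m u. 1 \<le> m \<and> m \<le> i \<and> u \<le> j m \<and> w = sel m u"
        then obtain m u where "m \<le> i" "w = sel m u" by blast
        then have "blk w \<le> i" using sel_eq(5) by simp
        then show ?thesis using il by auto
      qed simp
    qed
    then show "ev (LR l)" using that by (auto simp: ev_def lab_LR)
  qed
  have S0in: "S0 \<in> set \<rho>" unfolding setp by simp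
  have selS: "Sb c \<noteq> sel m u" for c m u using sel_eq(3) by metis
  have noSb: "Sb c \<notin> set \<rho>" for c unfolding setp using selS by auto
  have LS: "\<forall>w\<in>set \<rho>. LS \<in> KI_label n j w"
    using noSb by (auto simp: lab_LS)
  have A: "\<forall>l\<in>set [1..<Suc n]. ev (LX l) \<and> \<not> ev (LR l) \<longrightarrow> peval ev (F l)"
  proof (intro ballI impI)
    fix l assume l: "l \<in> set [1..<Suc n]" and e: "ev (LX l) \<and> \<not> ev (LR l)"
    have l1: "1 \<le> l" "l \<le> n" using l by auto
    then have li: "l \<le> i" using evR e by auto
    then have vl: "vI F l" using evX l1 e by auto
    have "peval ev (F l) = peval (\<lambda>lt. case lt of LX k \<Rightarrow> snval F (l - 1) k | _ \<Rightarrow> zw l lt) (F l)"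
      apply (rule F_link) using l1 li evX evZ by auto
    then show "peval ev (F l)" using zw_sat[OF l1(1) vl] by simp
  qed
  have B: "\<forall>m. 1 \<le> m \<and> m < length \<rho> \<longrightarrow>
      (\<exists>l\<in>set [1..<Suc n]. hsat (KI n j) (HA (HProp (LP l))) (take m \<rho>)) \<longrightarrow>
      hsat (KI n j) (HA (HAnd (HNot (HProp LS)) (HAnd ell2 (HA (HAnd ell2 (HNot p)))))) (take m \<rho>)"
  proof (intro allI impI)
    fix m assume m: "1 \<le> m \<and> m < length \<rho>"
      and "\<exists>l\<in>set [1..<Suc n]. hsat (KI n j) (HA (HProp (LP l))) (take m \<rho>)"
    then obtain l \<rho>'' where l: "1 \<le> l" "l \<le> n" and r: "is_track (KI n j) \<rho>''"
      "hd \<rho>'' = last (take m \<rho>)" "\<forall>w\<in>set \<rho>''. LP l \<in> KI_label n j w"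
      by (auto simp del: upt_Suc)
    have "\<rho>'' \<noteq> []" using r(1) by (simp add: is_track_def)
    then have "LP l \<in> KI_label n j (last (take m \<rho>))" using r by (metis hd_in_set)
    then have lt: "last (take m \<rho>) = WXb l" by (simp add: lab_LP)
    have "take m \<rho> \<noteq> []" using m by auto
    then have "last (take m \<rho>) \<in> set \<rho>" by (meson in_set_takeD last_in_set)
    then have "WXb l \<in> set \<rho>" using lt by simp
    then have l2: "l \<le> i" "\<not> vI F l" using WXb_in by auto
    then have l3: "l < i" using v by (metis le_neq_implies_less)
    have "\<not> hsat (KI n j) p [Sb l, WX l]" using IH[OF l(1) l3, of "[Sb l, WX l]"] l2 by simp
    have t2: "is_track (KI n j) [WXb l, Sb l]" using l by (simp add: is_track_two st_WXb st_Sb T_Sb)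
    have t3: "is_track (KI n j) [Sb l, WX l]" using l by (simp add: is_track_two st_WX st_Sb T_Sb2)
    have "hsat (KI n j) (HAnd ell2 (HNot p)) [Sb l, WX l]" using \<open>\<not> hsat (KI n j) p [Sb l, WX l]\<close>
      by (simp add: hsat_ell2)
    then have "hsat (KI n j) (HA (HAnd ell2 (HNot p))) [WXb l, Sb l]"
      using t3 by (simp only: hsat.simps) (rule exI[of _ "[Sb l, WX l]"], simp)
    then have "hsat (KI n j) (HAnd (HNot (HProp LS)) (HAnd ell2 (HA (HAnd ell2 (HNot p))))) [WXb l, Sb l]"
      by (simp add: hsat_ell2 lab_LS)
    then show "hsat (KI n j) (HA (HAnd (HNot (HProp LS)) (HAnd ell2 (HA (HAnd ell2 (HNot p)))))) (take m \<rho>)"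
      using t2 lt by (simp only: hsat.simps(6)) (rule exI[of _ "[WXb l, Sb l]"], simp)
  qed
  have c1: "hsat (KI n j) (HAnd (HProp LS) (HNot (HProp LT))) \<rho>"
    using LS S0in by (auto simp: lab_LT)
  have c2: "hsat (KI n j) (bigAnd (map (\<lambda>i. HImp (HAnd (HProp (LX i)) (HNot (HProp (LR i)))) (pf_to_hs (F i))) [1..<Suc n])) \<rho>"
    unfolding hsat_bigAnd
  proof (intro ballI)
    fix f assume "f \<in> set (map (\<lambda>i. HImp (HAnd (HProp (LX i)) (HNot (HProp (LR i)))) (pf_to_hs (F i))) [1..<Suc n])"
    then obtain l where l: "l \<in> set [1..<Suc n]" "f = HImp (HAnd (HProp (LX l)) (HNot (HProp (LR l)))) (pf_to_hs (F l))"
      by (auto simp del: upt_Suc)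
    have hp: "hsat (KI n j) (HProp lt) \<rho> = ev lt" for lt by (simp add: ev_def)
    show "hsat (KI n j) f \<rho>"
      using A l by (simp only: hsat_HImp pf hp hsat.simps(2,3)) blast
  qed
  have c3: "hsat (KI n j) (HBoxB (HImp (bigOr (map (\<lambda>i. HA (HProp (LP i))) [1..<Suc n]))
                    (HA (HAnd (HNot (HProp LS)) (HAnd ell2 (HA (HAnd ell2 (HNot p))))))))  \<rho>"
    unfolding hsat_HBoxB hsat_HImp hsat_bigOr set_map using B by (simp del: upt_Suc)
  have "hsat (KI n j) (phi_body n F p) \<rho>"
    unfolding phi_body_def using c1 c2 c3 by (simp only: hsat.simps(3))
  then show ?thesis using tr hd by (simp add: \<rho>_def)
qed

lemma psi_char: "1 \<le> i \<Longrightarrow> i \<le> k \<Longrightarrow> i \<le> n \<Longrightarrow> last \<rho> = WX i \<Longrightarrow>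
  hsat (KI n j) (psi n F k) \<rho> \<longleftrightarrow> vI F i"
proof (induction k arbitrary: i \<rho>)
  case 0 then show ?case by simp
next
  case (Suc k)
  have IH: "hsat (KI n j) (psi n F k) \<rho>' \<longleftrightarrow> vI F l" if "1 \<le> l" "l < i" "last \<rho>' = WX l" for l \<rho>'
  proof -
    have "l \<le> k" "l \<le> n" using that Suc.prems by auto
    then show ?thesis using Suc.IH[of l \<rho>'] that by blast
  qed
  have i: "1 \<le> i" "i \<le> n" using Suc.prems by auto
  have unf: "hsat (KI n j) (psi n F (Suc k)) \<rho> \<longleftrightarrow>
     (\<exists>\<rho>'. is_track (KI n j) \<rho>' \<and> hd \<rho>' = WX i \<and> hsat (KI n j) (phi_body n F (psi n F k)) \<rho>')"
    using Suc.prems(4) by (simp only: psi.simps(2) hsat.simps(6))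
  show ?case
  proof
    assume "hsat (KI n j) (psi n F (Suc k)) \<rho>"
    then obtain \<rho>' where r: "is_track (KI n j) \<rho>'" "hd \<rho>' = WX i" "hsat (KI n j) (phi_body n F (psi n F k)) \<rho>'"
      using unf by blast
    show "vI F i" by (rule fwd[OF i IH r])
  next
    assume v: "vI F i"
    have "is_track (KI n j) (path i) \<and> hd (path i) = WX i \<and> hsat (KI n j) (phi_body n F (psi n F k)) (path i)"
      by (rule bwd[OF i IH v])
    then show "hsat (KI n j) (psi n F (Suc k)) \<rho>"
      using unf by blast
  qed
qed

lemma main: "vI F n \<longleftrightarrow> kmodels (KI n j) (HImp (HBoxB HBot) (psi n F n))"
proof
  assume v: "vI F n"
  show "kmodels (KI n j) (HImp (HBoxB HBot) (psi n F n))"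
    unfolding kmodels_def
  proof (intro allI impI)
    fix \<rho> assume r: "is_track (KI n j) \<rho> \<and> hd \<rho> = kinit (KI n j)"
    show "hsat (KI n j) (HImp (HBoxB HBot) (psi n F n)) \<rho>"
      unfolding hsat_HImp hsat_HBoxB
    proof
      assume "\<forall>i. 1 \<le> i \<and> i < length \<rho> \<longrightarrow> hsat (KI n j) HBot (take i \<rho>)"
      then have "length \<rho> \<le> 1"
      proof -
        assume a: "\<forall>i. 1 \<le> i \<and> i < length \<rho> \<longrightarrow> hsat (KI n j) HBot (take i \<rho>)"
        show ?thesis
        proof (rule ccontr)
          assume "\<not> length \<rho> \<le> 1"
          then have "1 \<le> (1::nat) \<and> 1 < length \<rho>" by simp
          then show False using a by (metis hsat.simps(5))
        qed
      qed
      moreover have "\<rho> \<noteq> []" using r by (simp add: is_track_def)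
      ultimately obtain a where "\<rho> = [a]" by (cases \<rho>) auto
      then have "last \<rho> = WX n" using r by simp
      then show "hsat (KI n j) (psi n F n) \<rho>" using psi_char[of n n \<rho>] n1 v by blast
    qed
  qed
next
  assume "kmodels (KI n j) (HImp (HBoxB HBot) (psi n F n))"
  then have "hsat (KI n j) (HImp (HBoxB HBot) (psi n F n)) [WX n]"
    unfolding kmodels_def using n1 by (auto simp: is_track_single st_WX)
  then have "hsat (KI n j) (psi n F n) [WX n]" by (simp add: hsat_HImp hsat_HBoxB)
  moreover have "last [WX n] = WX n" by simp
  ultimately show "vI F n" using psi_char[of n n "[WX n]"] n1 by blast
qed

end

theorem mainTheorem6:
  fixes n :: nat and j :: "nat \<Rightarrow> nat" and F :: "nat \<Rightarrow> letter pform"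
  assumes "1 \<le> n" and "snsat_instance n j F"
  shows "vI F n \<longleftrightarrow> kmodels (KI n j) (HImp (HBoxB HBot) (psi n F n))"
  using kc.main[OF kc.intro[OF assms]] .

end
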